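(* Let $0=t_0<t_1<\dots<t_n=1$ be a grid. Consider the following random procedure (the remasked AUDM sampler with the exact noise-conditioned denoiser). 1. Draw $U_{t_n}$ uniformly from $\mathsf X$, then draw $X_{t_n}\sim p_{t_n}(\cdot\mid U_{t_n})$. 2. For $i=n-1,n-2,\dots,0$: - draw $X_0'\sim p_{0|t_{i+1}}(\cdot\mid X_{t_{i+1}},U_{t_{i+1}})$; - draw $X_{t_i}\sim q_{t_i|0,t_{i+1}}(\cdot\mid X_0',X_{t_{i+1}})$ (for $t_i=0$ this means $X_{t_0}=X_0'$); - independently over $\ell$, draw $U^\ell_{t_i}$ as follows: if $X^\ell_{t_i}\ne X_0'^{\,\ell}$, set $U^\ell_{t_i}=X^\ell_{t_i}$; otherwise draw $U^\ell_{t_i}\sim\mathrm{Cat}\big(\frac{X_0'^{\,\ell}+\alpha_{t_i}(\mathbf 1-X_0'^{\,\ell})}{1+(K-1)\alpha_{t_i}}\big)$. Then the law of $(X_{t_0},\dots,X_{t_n})$ is the UDM reverse-chain law $$p_{t_n}(\mathbf x_{t_n})\prod_{i=1}^n p_{t_{i-1}|t_i}(\mathbf x_{t_{i-1}}\mid\mathbf x_{t_i}).$$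
   Context: **UDM setup.** - Let $K\ge2$, $L\ge1$ and $\mathsf V=\{1,\dots,K\}$. Tokens are identified with the standard basis vectors of $\mathbb R^K$, and $\mathbf 1$ is the all-ones vector. - $\mathsf X=\mathsf V^L$, with $\mathbf x^\ell$ the $\ell$-th token. $p_0$ is a distribution on $\mathsf X$. - The schedule $\alpha:[0,1]\to[0,1]$ is strictly decreasing, with $\alpha_0=1$ and $\alpha_t\in(0,1)$ for $t\in(0,1]$. Set $\alpha_{t|s}=\alpha_t/\alpha_s$. - The UDM forward kernel is $q_{t|s}(\mathbf x_t\mid\mathbf x_s)=\prod_\ell\langle\mathbf x_t^\ell,\alpha_{t|s}\mathbf x_s^\ell+(1-\alpha_{t|s})\mathbf 1/K\rangle$. - $p_t(\mathbf x)=\sum_{\mathbf x_0}p_0(\mathbf x_0)q_{t|0}(\mathbf x\mid\mathbf x_0)$. - UDM reverse kernel: $p_{s|t}(\mathbf x_s\mid\mathbf x_t)=p_s(\mathbf x_s)q_{t|s}(\mathbf x_t\mid\mathbf x_s)/p_t(\mathbf x_t)$. - UDM bridge: $q_{s|0,t}(\mathbf x_s\mid\mathbf x_0,\mathbf x_t)=q_{t|s}(\mathbf x_t\mid\mathbf x_s)q_{s|0}(\mathbf x_s\mid\mathbf x_0)/q_{t|0}(\mathbf x_t\mid\mathbf x_0)$ for $s>0$, and $q_{0|0,t}(\mathbf x\mid\mathbf x_0,\mathbf x_t)=\mathbf 1\{\mathbf x=\mathbf x_0\}$. **Absorbing lifting.** - For $\mathbf u\in\mathsf X$, define $q_{t|0}(\mathbf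 x_t\mid\mathbf x_0,\mathbf u)=\prod_\ell\langle\mathbf x_t^\ell,\alpha_t\mathbf x_0^\ell+(1-\alpha_t)\mathbf u^\ell\rangle$. - $p_t(\mathbf x\mid\mathbf u)=\sum_{\mathbf x_0}p_0(\mathbf x_0)q_{t|0}(\mathbf x\mid\mathbf x_0,\mathbf u)$. - Noise-conditioned denoiser: $p_{0|t}(\mathbf x_0\mid\mathbf x_t,\mathbf u)=p_0(\mathbf x_0)q_{t|0}(\mathbf x_t\mid\mathbf x_0,\mathbf u)/p_t(\mathbf x_t\mid\mathbf u)$, defined when $p_t(\mathbf x_t\mid\mathbf u)>0$. *)

theory Defs
  imports "HOL-Library.FuncSet" Complex_Main
begin

text \<open>Tokens are 1..K (token v corresponds to the standard basis vector e_v).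
  A sequence is a function on {0..<L} (extensional, PiE).\<close>

definition Xsp :: "nat \<Rightarrow> nat \<Rightarrow> (nat \<Rightarrow> nat) set" where
  "Xsp K L = {0..<L} \<rightarrow>\<^sub>E {1..K}"

text \<open>Token-level inner product  < e_i , a e_j + (1-a) 1/K >.\<close>
definition tok_kernel :: "nat \<Rightarrow> real \<Rightarrow> nat \<Rightarrow> nat \<Rightarrow> real" where
  "tok_kernel K a i j = a * (if i = j then 1 else 0) + (1 - a) / real K"

definition q_udm :: "nat \<Rightarrow> nat \<Rightarrow> (real \<Rightarrow> real) \<Rightarrow> real \<Rightarrow> real
    \<Rightarrow> (nat \<Rightarrow> nat) \<Rightarrow> (nat \<Rightarrow> nat) \<Rightarrow> real" where
  "q_udm K L \<alpha> t s xt xs = (\<Prod>l<L. tok_kernel K (\<alpha> t / \<alpha> s) (xt l) (xs l))"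

definition p_udm :: "nat \<Rightarrow> nat \<Rightarrow> (real \<Rightarrow> real) \<Rightarrow> ((nat \<Rightarrow> nat) \<Rightarrow> real) \<Rightarrow> real
    \<Rightarrow> (nat \<Rightarrow> nat) \<Rightarrow> real" where
  "p_udm K L \<alpha> p0 t x = (\<Sum>x0\<in>Xsp K L. p0 x0 * q_udm K L \<alpha> t 0 x x0)"

definition rev_udm :: "nat \<Rightarrow> nat \<Rightarrow> (real \<Rightarrow> real) \<Rightarrow> ((nat \<Rightarrow> nat) \<Rightarrow> real) \<Rightarrow> real \<Rightarrow> real
    \<Rightarrow> (nat \<Rightarrow> nat) \<Rightarrow> (nat \<Rightarrow> nat) \<Rightarrow> real" where
  "rev_udm K L \<alpha> p0 s t xs xt =
     p_udm K L \<alpha> p0 s xs * q_udm K L \<alpha> t s xt xs / p_udm K L \<alpha> p0 t xt"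

definition bridge_udm :: "nat \<Rightarrow> nat \<Rightarrow> (real \<Rightarrow> real) \<Rightarrow> real \<Rightarrow> real
    \<Rightarrow> (nat \<Rightarrow> nat) \<Rightarrow> (nat \<Rightarrow> nat) \<Rightarrow> (nat \<Rightarrow> nat) \<Rightarrow> real" where
  "bridge_udm K L \<alpha> s t xs x0 xt =
     (if s = 0 then (if xs = x0 then 1 else 0)
      else q_udm K L \<alpha> t s xt xs * q_udm K L \<alpha> s 0 xs x0 / q_udm K L \<alpha> t 0 xt x0)"

definition q_abs :: "nat \<Rightarrow> (real \<Rightarrow> real) \<Rightarrow> real
    \<Rightarrow> (nat \<Rightarrow> nat) \<Rightarrow> (nat \<Rightarrow> nat) \<Rightarrow> (nat \<Rightarrow> nat) \<Rightarrow> real" where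
  "q_abs L \<alpha> t xt x0 u =
     (\<Prod>l<L. \<alpha> t * (if xt l = x0 l then 1 else 0) + (1 - \<alpha> t) * (if xt l = u l then 1 else 0))"

definition p_abs :: "nat \<Rightarrow> nat \<Rightarrow> (real \<Rightarrow> real) \<Rightarrow> ((nat \<Rightarrow> nat) \<Rightarrow> real) \<Rightarrow> real
    \<Rightarrow> (nat \<Rightarrow> nat) \<Rightarrow> (nat \<Rightarrow> nat) \<Rightarrow> real" where
  "p_abs K L \<alpha> p0 t x u = (\<Sum>x0\<in>Xsp K L. p0 x0 * q_abs L \<alpha> t x x0 u)"

text \<open>Noise-conditioned denoiser p_{0|t}(x0 | xt, u) (only used where p_t(xt|u) > 0;
  elsewhere HOL division by zero gives 0, and such states have probability 0 in the sampler).\<close>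
definition den_abs :: "nat \<Rightarrow> nat \<Rightarrow> (real \<Rightarrow> real) \<Rightarrow> ((nat \<Rightarrow> nat) \<Rightarrow> real) \<Rightarrow> real
    \<Rightarrow> (nat \<Rightarrow> nat) \<Rightarrow> (nat \<Rightarrow> nat) \<Rightarrow> (nat \<Rightarrow> nat) \<Rightarrow> real" where
  "den_abs K L \<alpha> p0 t x0 xt u = p0 x0 * q_abs L \<alpha> t xt x0 u / p_abs K L \<alpha> p0 t xt u"

definition u_kernel :: "nat \<Rightarrow> nat \<Rightarrow> real
    \<Rightarrow> (nat \<Rightarrow> nat) \<Rightarrow> (nat \<Rightarrow> nat) \<Rightarrow> (nat \<Rightarrow> nat) \<Rightarrow> real" where
  "u_kernel K L a u x x0 =
     (\<Prod>l<L. if x l \<noteq> x0 l then (if u l = x l then 1 else 0)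
             else (if u l = x0 l then 1 else a) / (1 + (real K - 1) * a))"

text \<open>Joint law of (X_{t_0},...,X_{t_n}) produced by the remasked AUDM sampler:
  the auxiliary variables U_{t_0..t_n} and X_0' (one per step i<n) are marginalised out.\<close>
definition sampler_law :: "nat \<Rightarrow> nat \<Rightarrow> (real \<Rightarrow> real) \<Rightarrow> ((nat \<Rightarrow> nat) \<Rightarrow> real)
    \<Rightarrow> nat \<Rightarrow> (nat \<Rightarrow> real) \<Rightarrow> (nat \<Rightarrow> (nat \<Rightarrow> nat)) \<Rightarrow> real" where
  "sampler_law K L \<alpha> p0 n ts xs =
     (\<Sum>us\<in>{0..n} \<rightarrow>\<^sub>E Xsp K L. \<Sum>x0s\<in>{0..<n} \<rightarrow>\<^sub>E Xsp K L.
        (1 / real (card (Xsp K L))) * p_abs K L \<alpha> p0 (ts n) (xs n) (us n) *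
        (\<Prod>i<n. den_abs K L \<alpha> p0 (ts (Suc i)) (x0s i) (xs (Suc i)) (us (Suc i))
               * bridge_udm K L \<alpha> (ts i) (ts (Suc i)) (xs i) (x0s i) (xs (Suc i))
               * u_kernel K L (\<alpha> (ts i)) (us i) (xs i) (x0s i)))"

end

theory Submission
  imports Defs
begin

lemma sum_PiE_insert:
  assumes "a \<notin> A"
  shows "(\<Sum>f\<in>PiE (insert a A) B. g f) = (\<Sum>x\<in>B a. \<Sum>f\<in>PiE A B. g (f(a:=x)))"
proof -
  have "(\<Sum>f\<in>PiE (insert a A) B. g f) = (\<Sum>p\<in>B a \<times> PiE A B. g ((\<lambda>(y, h). h(a := y)) p))"
    unfolding PiE_insert_eq by (subst sum.reindex[OF inj_combinator[OF assms]]) simp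
  also have "\<dots> = (\<Sum>x\<in>B a. \<Sum>f\<in>PiE A B. g (f(a:=x)))"
    by (simp add: sum.cartesian_product split_beta)
  finally show ?thesis .
qed

fun M :: "'s set \<Rightarrow> 't set \<Rightarrow> (nat \<Rightarrow> 's \<Rightarrow> 't \<Rightarrow> 's \<Rightarrow> real) \<Rightarrow> nat \<Rightarrow> ('s \<Rightarrow> real) \<Rightarrow> 's \<Rightarrow> real" where
  "M S T F 0 h = h"
| "M S T F (Suc n) h = M S T F n (\<lambda>v. \<Sum>u\<in>S. \<Sum>y\<in>T. h u * F n u y v)"

lemma chain:
  "(\<Sum>us\<in>{0..n} \<rightarrow>\<^sub>E S. \<Sum>ys\<in>{0..<n} \<rightarrow>\<^sub>E T. h (us n) * (\<Prod>i<n. F i (us (Suc i)) (ys i) (us i)))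
   = (\<Sum>u\<in>S. M S T F n h u)"
proof (induction n arbitrary: h)
  case 0
  have "(\<Sum>us\<in>{0..0::nat} \<rightarrow>\<^sub>E S. h (us 0)) = (\<Sum>u\<in>S. \<Sum>f\<in>{} \<rightarrow>\<^sub>E S. h ((f(0:=u)) 0))"
    using sum_PiE_insert[where a=0 and A="{}" and B="\<lambda>_. S" and g="\<lambda>us. h (us 0)"] by simp
  then show ?case by simp
next
  case (Suc n)
  let ?h' = "\<lambda>v. \<Sum>u\<in>S. \<Sum>y\<in>T. h u * F n u y v"
  have e1: "{0..Suc n} = insert (Suc n) {0..n}" by auto
  have e2: "{0..<Suc n} = insert n {0..<n}" by auto
  have "(\<Sum>us\<in>{0..Suc n} \<rightarrow>\<^sub>E S. \<Sum>ys\<in>{0..<Suc n} \<rightarrow>\<^sub>E T. h (us (Suc n)) * (\<Prod>i<Suc n. F i (us (Suc i)) (ys i) (us i)))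
     = (\<Sum>u\<in>S. \<Sum>us\<in>{0..n} \<rightarrow>\<^sub>E S. \<Sum>y\<in>T. \<Sum>ys\<in>{0..<n} \<rightarrow>\<^sub>E T.
          h u * ((\<Prod>i<n. F i (us (Suc i)) (ys i) (us i)) * F n u y (us n)))"
    unfolding e1 e2
    apply (subst sum_PiE_insert, simp)
    apply (subst sum_PiE_insert, simp)
    apply (intro sum.cong refl)
    apply (simp add: lessThan_Suc)
    done
  also have "\<dots> = (\<Sum>us\<in>{0..n} \<rightarrow>\<^sub>E S. \<Sum>ys\<in>{0..<n} \<rightarrow>\<^sub>E T. ?h' (us n) * (\<Prod>i<n. F i (us (Suc i)) (ys i) (us i)))"
  proof -
    let ?G = "\<lambda>u us y ys. h u * ((\<Prod>i<n. F i (us (Suc i)) (ys i) (us i)) * F n u y (us n))"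
    have "(\<Sum>u\<in>S. \<Sum>us\<in>{0..n} \<rightarrow>\<^sub>E S. \<Sum>y\<in>T. \<Sum>ys\<in>{0..<n} \<rightarrow>\<^sub>E T. ?G u us y ys)
        = (\<Sum>us\<in>{0..n} \<rightarrow>\<^sub>E S. \<Sum>u\<in>S. \<Sum>y\<in>T. \<Sum>ys\<in>{0..<n} \<rightarrow>\<^sub>E T. ?G u us y ys)"
      by (rule sum.swap)
    also have "\<dots> = (\<Sum>us\<in>{0..n} \<rightarrow>\<^sub>E S. \<Sum>u\<in>S. \<Sum>ys\<in>{0..<n} \<rightarrow>\<^sub>E T. \<Sum>y\<in>T. ?G u us y ys)"
      by (intro sum.cong refl sum.swap)
    also have "\<dots> = (\<Sum>us\<in>{0..n} \<rightarrow>\<^sub>E S. \<Sum>ys\<in>{0..<n} \<rightarrow>\<^sub>E T. \<Sum>u\<in>S. \<Sum>y\<in>T. ?G u us y ys)"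
      by (intro sum.cong refl sum.swap)
    also have "\<dots> = (\<Sum>us\<in>{0..n} \<rightarrow>\<^sub>E S. \<Sum>ys\<in>{0..<n} \<rightarrow>\<^sub>E T. ?h' (us n) * (\<Prod>i<n. F i (us (Suc i)) (ys i) (us i)))"
      by (intro sum.cong refl) (simp add: sum_distrib_right mult.assoc[symmetric], simp add: mult_ac)
    finally show ?thesis .
  qed
  also have "\<dots> = (\<Sum>u\<in>S. M S T F (Suc n) h u)" using Suc by simp
  finally show ?case .
qed


lemma finite_X: "finite (Xsp K L)"
  by (simp add: Xsp_def finite_PiE)

lemma card_X: "card (Xsp K L) = K ^ L"
  by (simp add: Xsp_def card_PiE)

lemma X_tok: "x \<in> Xsp K L \<Longrightarrow> l < L \<Longrightarrow> x l \<in> {1..K}"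
  by (auto simp: Xsp_def PiE_def Pi_def)

lemma X_eq: "x \<in> Xsp K L \<Longrightarrow> y \<in> Xsp K L \<Longrightarrow> (\<forall>l<L. x l = y l) \<Longrightarrow> x = y"
  by (rule PiE_ext[of x "{0..<L}" "\<lambda>_. {1..K}"]) (auto simp: Xsp_def)

lemma sum_qabs:
  assumes x: "x \<in> Xsp K L" and K: "K \<ge> 1"
  shows "(\<Sum>u\<in>Xsp K L. q_abs L \<alpha> t x y u) = real K ^ L * (\<Prod>l<L. tok_kernel K (\<alpha> t) (x l) (y l))"
proof -
  let ?f = "\<lambda>l c. \<alpha> t * (if x l = y l then 1 else 0) + (1 - \<alpha> t) * (if x l = c then 1 else (0::real))"
  have "(\<Sum>u\<in>Xsp K L. q_abs L \<alpha> t x y u) = (\<Sum>u\<in>PiE {0..<L} (\<lambda>_. {1..K}). \<Prod>l\<in>{0..<L}. ?f l (u l))"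
    by (simp add: q_abs_def Xsp_def atLeast0LessThan)
  also have "\<dots> = (\<Prod>l\<in>{0..<L}. \<Sum>c\<in>{1..K}. ?f l c)"
    by (rule prod_sum_PiE[symmetric]) auto
  also have "\<dots> = (\<Prod>l\<in>{0..<L}. real K * tok_kernel K (\<alpha> t) (x l) (y l))"
  proof (rule prod.cong[OF refl])
    fix l assume "l \<in> {0..<L}"
    then have xl: "x l \<in> {1..K}" using X_tok[OF x] by auto
    have d: "(\<Sum>c\<in>{1..K}. (1 - \<alpha> t) * (if x l = c then 1 else 0)) = (\<Sum>c\<in>{1..K}. if x l = c then 1 - \<alpha> t else 0)"
      by (intro sum.cong) auto
    have "(\<Sum>c\<in>{1..K}. ?f l c) = real K * (\<alpha> t * (if x l = y l then 1 else 0)) + (1 - \<alpha> t)"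
      unfolding sum.distrib d using xl by simp
    also have "\<dots> = real K * tok_kernel K (\<alpha> t) (x l) (y l)"
      using K by (simp add: tok_kernel_def field_simps)
    finally show "(\<Sum>c\<in>{1..K}. ?f l c) = real K * tok_kernel K (\<alpha> t) (x l) (y l)" .
  qed
  also have "\<dots> = real K ^ L * (\<Prod>l<L. tok_kernel K (\<alpha> t) (x l) (y l))"
    by (simp add: prod.distrib atLeast0LessThan)
  finally show ?thesis .
qed

lemma tok_ukern:
  assumes "0 \<le> a" and "K \<ge> 1"
  shows "tok_kernel K a x y * (if x \<noteq> y then (if u = x then 1 else 0)
             else (if u = y then 1 else a) / (1 + (real K - 1) * a))
       = (a * (if x = y then 1 else 0) + (1 - a) * (if x = u then 1 else 0)) / real K"
proof -
  have pos: "1 + (real K - 1) * a > 0" using assms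
    by (smt (verit, best) of_nat_1 of_nat_mono mult_nonneg_nonneg)
  show ?thesis
  proof (cases "x = y")
    case True
    have "tok_kernel K a x y = (1 + (real K - 1) * a) / real K"
      using True assms by (simp add: tok_kernel_def field_simps)
    then show ?thesis using True pos by auto
  next
    case False
    then show ?thesis by (auto simp: tok_kernel_def)
  qed
qed

lemma qudm_ukern:
  assumes "0 \<le> a" and "K \<ge> 1"
  shows "(\<Prod>l<L. tok_kernel K a (z l) (y l)) * u_kernel K L a v z y
       = (\<Prod>l<L. a * (if z l = y l then 1 else 0) + (1 - a) * (if z l = v l then 1 else 0)) / real K ^ L"
proof -
  have "(\<Prod>l<L. tok_kernel K a (z l) (y l)) * u_kernel K L a v z y
     = (\<Prod>l<L. (a * (if z l = y l then 1 else 0) + (1 - a) * (if z l = v l then 1 else 0)) / real K)"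
    unfolding u_kernel_def prod.distrib[symmetric]
    by (intro prod.cong refl tok_ukern[OF assms])
  also have "\<dots> = (\<Prod>l<L. a * (if z l = y l then 1 else 0) + (1 - a) * (if z l = v l then 1 else 0)) / real K ^ L"
    by (simp add: prod_dividef)
  finally show ?thesis .
qed


lemma q_abs_nonneg: "0 \<le> \<alpha> t \<Longrightarrow> \<alpha> t \<le> 1 \<Longrightarrow> 0 \<le> q_abs L \<alpha> t x y u"
  unfolding q_abs_def by (intro prod_nonneg) auto

lemma tok_pos: "0 \<le> a \<Longrightarrow> a < 1 \<Longrightarrow> K \<ge> 1 \<Longrightarrow> 0 < tok_kernel K a i j"
  unfolding tok_kernel_def by (auto intro: add_nonneg_pos)

lemma q_udm_pos: "0 \<le> \<alpha> t / \<alpha> s \<Longrightarrow> \<alpha> t / \<alpha> s < 1 \<Longrightarrow> K \<ge> 1 \<Longrightarrow> 0 < q_udm K L \<alpha> t s x y"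
  unfolding q_udm_def by (intro prod_pos tok_pos) auto

lemma p_abs_den:
  assumes K: "K \<ge> 1" and p0: "\<forall>y\<in>Xsp K L. p0 y \<ge> 0" and y: "y \<in> Xsp K L"
    and at: "0 \<le> \<alpha> t" "\<alpha> t \<le> 1"
  shows "p_abs K L \<alpha> p0 t x u * den_abs K L \<alpha> p0 t y x u = p0 y * q_abs L \<alpha> t x y u"
proof (cases "p_abs K L \<alpha> p0 t x u = 0")
  case True
  have "\<forall>y\<in>Xsp K L. p0 y * q_abs L \<alpha> t x y u = 0"
    using True unfolding p_abs_def
    by (subst sum_nonneg_eq_0_iff[symmetric]) (auto simp: finite_X p0 q_abs_nonneg[of \<alpha> t, OF at] intro!: mult_nonneg_nonneg)
  then show ?thesis using True y by simp
next
  case False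
  then show ?thesis by (simp add: den_abs_def)
qed

lemma step_core:
  assumes K: "K \<ge> 1" and p0: "\<forall>y\<in>Xsp K L. p0 y \<ge> 0" and x: "x \<in> Xsp K L" and z: "z \<in> Xsp K L"
    and a0: "\<alpha> 0 = 1" and at: "0 < \<alpha> t" "\<alpha> t < 1" and as: "0 \<le> \<alpha> s" "\<alpha> s \<le> 1"
  shows "(\<Sum>u\<in>Xsp K L. \<Sum>y\<in>Xsp K L. (p_abs K L \<alpha> p0 t x u / real K ^ L) *
            (den_abs K L \<alpha> p0 t y x u * bridge_udm K L \<alpha> s t z y x * u_kernel K L (\<alpha> s) v z y))
        = q_udm K L \<alpha> t s x z * (p_abs K L \<alpha> p0 s z v / real K ^ L)"
proof -
  define S where "S = Xsp K L"
  define N where "N = real K ^ L"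
  have Npos: "N > 0" using K by (simp add: N_def)
  define q0 where "q0 y = (\<Prod>l<L. tok_kernel K (\<alpha> t) (x l) (y l))" for y
  define br where "br y = bridge_udm K L \<alpha> s t z y x" for y
  define uk where "uk y = u_kernel K L (\<alpha> s) v z y" for y
  have "(\<Sum>u\<in>S. \<Sum>y\<in>S. (p_abs K L \<alpha> p0 t x u / N) * (den_abs K L \<alpha> p0 t y x u * br y * uk y))
      = (\<Sum>u\<in>S. \<Sum>y\<in>S. (p0 y * br y * uk y / N) * q_abs L \<alpha> t x y u)"
  proof (intro sum.cong refl)
    fix u y assume "y \<in> S"
    then have "p_abs K L \<alpha> p0 t x u * den_abs K L \<alpha> p0 t y x u = p0 y * q_abs L \<alpha> t x y u"
      using p_abs_den[OF K p0, of y \<alpha> t x u] at by (simp add: S_def)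
    then show "(p_abs K L \<alpha> p0 t x u / N) * (den_abs K L \<alpha> p0 t y x u * br y * uk y)
        = (p0 y * br y * uk y / N) * q_abs L \<alpha> t x y u"
      by (simp add: field_simps)
  qed
  also have "\<dots> = (\<Sum>y\<in>S. (p0 y * br y * uk y / N) * (\<Sum>u\<in>S. q_abs L \<alpha> t x y u))"
    by (subst sum.swap) (simp add: sum_distrib_left)
  also have "\<dots> = (\<Sum>y\<in>S. p0 y * br y * uk y * q0 y)"
    using sum_qabs[OF x K] Npos K by (simp add: S_def N_def q0_def mult.assoc)
  also have "\<dots> = q_udm K L \<alpha> t s x z * (p_abs K L \<alpha> p0 s z v / N)"
  proof (cases "s = 0")
    case True
    have br0: "br y = (if z = y then 1 else 0)" for y using True by (simp add: br_def bridge_udm_def)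
    have uk0: "uk z = 1 / N"
      using True a0 K by (simp add: uk_def u_kernel_def N_def power_one_over)
    have qa: "q_abs L \<alpha> 0 z y v = (if z = y then 1 else 0)" if "y \<in> S" for y
    proof -
      have "q_abs L \<alpha> 0 z y v = (\<Prod>l<L. if z l = y l then 1 else 0)"
        using a0 by (simp add: q_abs_def)
      also have "\<dots> = (if z = y then 1 else 0)"
        using X_eq[OF z, of y] that by (auto simp: S_def)
      finally show ?thesis .
    qed
    have pa: "p_abs K L \<alpha> p0 0 z v = p0 z"
    proof -
      have "p_abs K L \<alpha> p0 0 z v = (\<Sum>y\<in>S. if z = y then p0 y else 0)"
        unfolding p_abs_def S_def by (intro sum.cong refl) (simp add: qa[unfolded S_def])
      then show ?thesis using z by (simp add: S_def finite_X)
    qed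
    have qt: "q_udm K L \<alpha> t 0 x z = q0 z" using a0 by (simp add: q_udm_def q0_def)
    have "(\<Sum>y\<in>S. p0 y * br y * uk y * q0 y) = (\<Sum>y\<in>S. if z = y then p0 y * uk y * q0 y else 0)"
      by (intro sum.cong refl) (simp add: br0)
    also have "\<dots> = p0 z * uk z * q0 z" using z by (simp add: S_def finite_X)
    finally show ?thesis using True by (simp add: uk0 pa qt)
  next
    case False
    have "p0 y * br y * uk y * q0 y = q_udm K L \<alpha> t s x z * (p0 y * q_abs L \<alpha> s z y v / N)" for y
    proof -
      have q0p: "q0 y > 0" unfolding q0_def using at K by (intro prod_pos tok_pos) auto
      have "q_udm K L \<alpha> t 0 x y = q0 y" using a0 by (simp add: q_udm_def q0_def)
      then have "br y = q_udm K L \<alpha> t s x z * q_udm K L \<alpha> s 0 z y / q0 y"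
        unfolding br_def bridge_udm_def using False by simp
      then have "br y * q0 y = q_udm K L \<alpha> t s x z * q_udm K L \<alpha> s 0 z y"
        using q0p by simp
      then have H1: "br y * q0 y = q_udm K L \<alpha> t s x z * q_udm K L \<alpha> s 0 z y" .
      have H2: "q_udm K L \<alpha> s 0 z y * uk y = q_abs L \<alpha> s z y v / N"
        using qudm_ukern[OF as(1) K, where L=L and z=z and y=y and v=v] a0
        unfolding q_udm_def uk_def q_abs_def N_def by simp
      have "p0 y * br y * uk y * q0 y = p0 y * (br y * q0 y) * uk y" by (simp only: mult_ac)
      also have "\<dots> = p0 y * q_udm K L \<alpha> t s x z * (q_udm K L \<alpha> s 0 z y * uk y)"
        unfolding H1 by (simp only: mult_ac)
      also have "\<dots> = q_udm K L \<alpha> t s x z * (p0 y * q_abs L \<alpha> s z y v / N)"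
        unfolding H2 by simp
      finally show ?thesis .
    qed
    then show ?thesis
      by (simp add: p_abs_def sum_distrib_left sum_divide_distrib S_def)
  qed
  finally show ?thesis by (simp add: S_def N_def br_def uk_def mult.assoc)
qed


lemma sum_p_abs:
  assumes K: "K \<ge> 1" and x: "x \<in> Xsp K L" and a0: "\<alpha> 0 = 1"
  shows "(\<Sum>u\<in>Xsp K L. p_abs K L \<alpha> p0 t x u) = real K ^ L * p_udm K L \<alpha> p0 t x"
proof -
  have "(\<Sum>u\<in>Xsp K L. p_abs K L \<alpha> p0 t x u) = (\<Sum>y\<in>Xsp K L. p0 y * (\<Sum>u\<in>Xsp K L. q_abs L \<alpha> t x y u))"
    unfolding p_abs_def by (subst sum.swap) (simp add: sum_distrib_left)
  also have "\<dots> = (\<Sum>y\<in>Xsp K L. real K ^ L * (p0 y * q_udm K L \<alpha> t 0 x y))"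
    using sum_qabs[OF x K] a0 by (simp add: q_udm_def mult_ac)
  also have "\<dots> = real K ^ L * p_udm K L \<alpha> p0 t x"
    by (simp add: p_udm_def sum_distrib_left)
  finally show ?thesis .
qed

lemma telescope:
  fixes P :: "nat \<Rightarrow> real"
  shows "(\<forall>i\<in>{1..m}. P i \<noteq> 0) \<Longrightarrow> P m * (\<Prod>i\<in>{1..m}. P (i - 1) / P i) = P 0"
proof (induction m)
  case 0
  then show ?case by simp
next
  case (Suc m)
  have "(\<Prod>i\<in>{1..Suc m}. P (i - 1) / P i) = P m / P (Suc m) * (\<Prod>i\<in>{1..m}. P (i - 1) / P i)"
    by (subst prod.nat_ivl_Suc') auto
  then show ?case using Suc by (auto simp: mult.commute)
qed

theorem mainTheorem7:
  fixes K L n :: nat and \<alpha> :: "real \<Rightarrow> real" and p0 :: "(nat \<Rightarrow> nat) \<Rightarrow> real"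
    and ts :: "nat \<Rightarrow> real" and xs :: "nat \<Rightarrow> (nat \<Rightarrow> nat)"
  assumes K: "K \<ge> 2" and L: "L \<ge> 1"
    and alpha_dec: "\<And>s t. 0 \<le> s \<Longrightarrow> s < t \<Longrightarrow> t \<le> 1 \<Longrightarrow> \<alpha> t < \<alpha> s"
    and alpha0: "\<alpha> 0 = 1"
    and alpha_range: "\<And>t. 0 < t \<Longrightarrow> t \<le> 1 \<Longrightarrow> 0 < \<alpha> t \<and> \<alpha> t < 1"
    and p0_nonneg: "\<And>x. x \<in> Xsp K L \<Longrightarrow> p0 x \<ge> 0"
    and p0_sum: "(\<Sum>x\<in>Xsp K L. p0 x) = 1"
    and n: "n \<ge> 1"
    and grid_mono: "\<And>i. i < n \<Longrightarrow> ts i < ts (Suc i)"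
    and grid0: "ts 0 = 0" and grid1: "ts n = 1"
    and xs: "xs \<in> {0..n} \<rightarrow>\<^sub>E Xsp K L"
  shows "sampler_law K L \<alpha> p0 n ts xs =
           p_udm K L \<alpha> p0 (ts n) (xs n) *
           (\<Prod>i\<in>{1..n}. rev_udm K L \<alpha> p0 (ts (i - 1)) (ts i) (xs (i - 1)) (xs i))"
proof -
  define S where "S = Xsp K L"
  have K1: "K \<ge> 1" using K by simp
  have p0nn: "\<forall>y\<in>Xsp K L. p0 y \<ge> 0" using p0_nonneg by auto
  have xsS: "xs k \<in> Xsp K L" if "k \<le> n" for k using xs that by auto
  have mono: "ts i \<le> ts j" if "i \<le> j" "j \<le> n" for i j
    using that
  proof (induction j)
    case 0 then show ?case by simp
  next
    case (Suc j)
    show ?case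
    proof (cases "i = Suc j")
      case True then show ?thesis by simp
    next
      case False
      then have "ts i \<le> ts j" using Suc by simp
      also have "ts j < ts (Suc j)" using grid_mono Suc by simp
      finally show ?thesis by simp
    qed
  qed
  have tspos: "ts k > 0" if "1 \<le> k" "k \<le> n" for k
  proof -
    have "ts 0 < ts 1" using grid_mono n by simp
    also have "ts 1 \<le> ts k" using mono that by simp
    finally show ?thesis using grid0 by simp
  qed
  have tsle: "ts k \<le> 1" if "k \<le> n" for k using mono[of k n] that grid1 by simp
  have apos: "0 < \<alpha> (ts k) \<and> \<alpha> (ts k) < 1" if "1 \<le> k" "k \<le> n" for k
    using alpha_range tspos tsle that by simp
  have arange: "0 \<le> \<alpha> (ts k) \<and> \<alpha> (ts k) \<le> 1" if "k \<le> n" for k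
  proof (cases "k = 0")
    case True then show ?thesis using grid0 alpha0 by simp
  next
    case False then show ?thesis using apos[of k] that by simp
  qed
  define q where "q j = q_udm K L \<alpha> (ts j) (ts (j - 1)) (xs j) (xs (j - 1))" for j
  define Q where "Q k = (\<Prod>j\<in>{Suc k..n}. q j)" for k
  define g where "g k u = Q k * (p_abs K L \<alpha> p0 (ts k) (xs k) u / real K ^ L)" for k u
  define F where "F i u y v = den_abs K L \<alpha> p0 (ts (Suc i)) y (xs (Suc i)) u
      * bridge_udm K L \<alpha> (ts i) (ts (Suc i)) (xs i) y (xs (Suc i))
      * u_kernel K L (\<alpha> (ts i)) v (xs i) y" for i u y v
  have "sampler_law K L \<alpha> p0 n ts xs =
     (\<Sum>us\<in>{0..n} \<rightarrow>\<^sub>E S. \<Sum>ys\<in>{0..<n} \<rightarrow>\<^sub>E S. g n (us n) * (\<Prod>i<n. F i (us (Suc i)) (ys i) (us i)))"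
    unfolding sampler_law_def g_def Q_def F_def S_def card_X by simp
  also have "\<dots> = (\<Sum>u\<in>S. M S S F n (g n) u)" by (rule chain)
  also have "M S S F n (g n) = g 0"
  proof -
    have step: "(\<lambda>v. \<Sum>u\<in>S. \<Sum>y\<in>S. g (Suc k) u * F k u y v) = g k" if k: "k < n" for k
    proof
      fix v
      have "(\<Sum>u\<in>S. \<Sum>y\<in>S. g (Suc k) u * F k u y v)
          = Q (Suc k) * (\<Sum>u\<in>S. \<Sum>y\<in>S. (p_abs K L \<alpha> p0 (ts (Suc k)) (xs (Suc k)) u / real K ^ L) *
            (den_abs K L \<alpha> p0 (ts (Suc k)) y (xs (Suc k)) u
             * bridge_udm K L \<alpha> (ts k) (ts (Suc k)) (xs k) y (xs (Suc k))
             * u_kernel K L (\<alpha> (ts k)) v (xs k) y))"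
        unfolding g_def F_def by (simp add: sum_distrib_left mult.assoc)
      also have "\<dots> = Q (Suc k) * (q_udm K L \<alpha> (ts (Suc k)) (ts k) (xs (Suc k)) (xs k) *
          (p_abs K L \<alpha> p0 (ts k) (xs k) v / real K ^ L))"
      proof -
        have xs1: "xs (Suc k) \<in> Xsp K L" using xsS k by simp
        have xs0: "xs k \<in> Xsp K L" using xsS k by simp
        have a1: "0 < \<alpha> (ts (Suc k))" "\<alpha> (ts (Suc k)) < 1" using apos[of "Suc k"] k by auto
        have a2: "0 \<le> \<alpha> (ts k)" "\<alpha> (ts k) \<le> 1" using arange[of k] k by auto
        show ?thesis unfolding S_def
          by (subst step_core[OF K1 p0nn xs1 xs0 alpha0 a1 a2]) (rule refl)
      qed
      also have "\<dots> = g k v"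
      proof -
        have "Q k = q (Suc k) * Q (Suc k)"
          unfolding Q_def using k by (subst prod.atLeast_Suc_atMost) auto
        then show ?thesis by (simp add: g_def q_def mult_ac)
      qed
      finally show "(\<Sum>u\<in>S. \<Sum>y\<in>S. g (Suc k) u * F k u y v) = g k v" .
    qed
    have "M S S F k (g k) = g 0" if "k \<le> n" for k
      using that
    proof (induction k)
      case 0 then show ?case by simp
    next
      case (Suc k)
      then show ?case using step[of k] by simp
    qed
    then show ?thesis by simp
  qed
  also have "(\<Sum>u\<in>S. g 0 u) = Q 0 * p_udm K L \<alpha> p0 (ts 0) (xs 0)"
    using sum_p_abs[where \<alpha>=\<alpha> and t="ts 0", OF K1 xsS[of 0, OF le0] alpha0] K1
    by (simp add: g_def S_def sum_distrib_left[symmetric] sum_divide_distrib[symmetric])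
  finally have LHS: "sampler_law K L \<alpha> p0 n ts xs = Q 0 * p_udm K L \<alpha> p0 (ts 0) (xs 0)" .
  define P where "P i = p_udm K L \<alpha> p0 (ts i) (xs i)" for i
  have Ppos: "P i \<noteq> 0" if "i \<in> {1..n}" for i
  proof -
    obtain y where y: "y \<in> Xsp K L" "p0 y > 0"
    proof (rule ccontr)
      assume "\<not> thesis"
      then have "\<forall>y\<in>Xsp K L. p0 y \<le> 0" using that by force
      then have "(\<Sum>x\<in>Xsp K L. p0 x) \<le> 0" by (intro sum_nonpos) auto
      then show False using p0_sum by simp
    qed
    have qp: "\<And>y. 0 < q_udm K L \<alpha> (ts i) 0 (xs i) y"
      using apos[of i] that alpha0 by (intro q_udm_pos K1) auto
    have "0 < P i" unfolding P_def p_udm_def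
      by (rule sum_pos2[OF finite_X y(1)]) (use y qp p0nn in \<open>auto intro: mult_nonneg_nonneg less_imp_le\<close>)
    then show ?thesis by simp
  qed
  have "(\<Prod>i\<in>{1..n}. rev_udm K L \<alpha> p0 (ts (i - 1)) (ts i) (xs (i - 1)) (xs i))
      = (\<Prod>i\<in>{1..n}. P (i - 1) / P i) * Q 0"
  proof -
    have "Q 0 = (\<Prod>j\<in>{1..n}. q j)" by (simp add: Q_def)
    then show ?thesis
      unfolding q_def P_def rev_udm_def by (simp add: prod.distrib[symmetric])
  qed
  then have "p_udm K L \<alpha> p0 (ts n) (xs n) * (\<Prod>i\<in>{1..n}. rev_udm K L \<alpha> p0 (ts (i - 1)) (ts i) (xs (i - 1)) (xs i))
      = (P n * (\<Prod>i\<in>{1..n}. P (i - 1) / P i)) * Q 0"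
    by (simp add: P_def mult.assoc)
  also have "\<dots> = P 0 * Q 0" using telescope[of n P] Ppos by simp
  finally show ?thesis using LHS by (simp add: P_def mult.commute)
qed

end
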